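(* Let $p$ be a prime and let $A$ be a nontrivial finite $p$-group. Define $A_0=A$ and $A_n=A_{n-1}\wr \mathbb{Z}/p\mathbb{Z}$ for $n\ge1$. Then for every integer $k$, $\lim_{n\to\infty} r_{A_n,k}=1$.
   Context: For a finite $p$-group $G$ with $|G|=p^g$ and maximum element order $p^{f}$, and for $k\in\mathbb{Z}$, define $r_{G,k}=\frac{1}{p^g}\cdot\#\{x\in G:\ \mathrm{order}(x)\le p^{f-k}\}$. For groups $A,B$, let $K=\prod_{b\in B}A$, on which $B$ acts by $x\cdot(\alpha_b)_b=(\alpha_{x^{-1}b})_b$ for $x\in B$; the wreath product $A\wr B$ is the semidirect product $K\rtimes B$ for this action. *)

theory Defs
  imports Complex_Main "HOL-Algebra.Algebra"
begin

text \<open>Universe of elements for the iterated wreath products: a leaf carries an element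
of the base group A; a node (alpha, x) is an element of K \<rtimes> B, where
alpha : B \<rightarrow> A_{n-1} (an element of K = prod_{b in B} A_{n-1}) and x in B.\<close>
datatype 'a wt = Leaf (leaf_val: 'a) | Node (node_fun: "nat \<Rightarrow> 'a wt") (node_top: nat)

definition leaf_group :: "('a, 'm) monoid_scheme \<Rightarrow> 'a wt monoid" where
  "leaf_group A =
     \<lparr> carrier = Leaf ` carrier A,
       monoid.mult = (\<lambda>u v. Leaf (leaf_val u \<otimes>\<^bsub>A\<^esub> leaf_val v)),
       one = Leaf \<one>\<^bsub>A\<^esub> \<rparr>"

text \<open>Wreath product G wr B = K \<rtimes> B with K = prod_{b in B} G, where B acts by
 (x . alpha)_b = alpha_{x^{-1} b}.  Hence
 (alpha, x) (beta, y) = (alpha * (x . beta), x y).\<close>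
definition wreath :: "'a wt monoid \<Rightarrow> nat monoid \<Rightarrow> 'a wt monoid" where
  "wreath G B =
     \<lparr> carrier = {Node alpha x | alpha x. alpha \<in> carrier B \<rightarrow>\<^sub>E carrier G \<and> x \<in> carrier B},
       monoid.mult = (\<lambda>u v. Node
                 (\<lambda>b\<in>carrier B. node_fun u b \<otimes>\<^bsub>G\<^esub>
                     node_fun v (inv\<^bsub>B\<^esub> (node_top u) \<otimes>\<^bsub>B\<^esub> b))
                 (node_top u \<otimes>\<^bsub>B\<^esub> node_top v)),
       one = Node (\<lambda>b\<in>carrier B. \<one>\<^bsub>G\<^esub>) \<one>\<^bsub>B\<^esub> \<rparr>"

definition Zmod :: "nat \<Rightarrow> nat monoid" where
  "Zmod p = \<lparr> carrier = {0..<p}, monoid.mult = (\<lambda>x y. (x + y) mod p), one = 0 \<rparr>"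

primrec iter_wreath :: "nat \<Rightarrow> ('a, 'm) monoid_scheme \<Rightarrow> nat \<Rightarrow> 'a wt monoid" where
  "iter_wreath p A 0 = leaf_group A"
| "iter_wreath p A (Suc n) = wreath (iter_wreath p A n) (Zmod p)"

text \<open>r_{G,k} = |{x : ord x \<le> p^(f-k)}| / p^g, where p^f is the maximal element order
 and p^g = |G|.  We write p^(f-k) = p^f * p^(-k) with p^f = Max of element orders.\<close>
definition r_ratio :: "nat \<Rightarrow> ('a, 'm) monoid_scheme \<Rightarrow> int \<Rightarrow> real" where
  "r_ratio p G k =
     real (card {x \<in> carrier G.
                 real (group.ord G x) \<le> real (Max (group.ord G ` carrier G)) * (real p) powi (- k)})
     / real (card (carrier G))"

end

theory Submission
  imports Defs
begin


lemma Zmod_group: assumes "p > 0" shows "group (Zmod p)"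
proof (rule groupI)
  show "\<And>x y. x \<in> carrier (Zmod p) \<Longrightarrow> y \<in> carrier (Zmod p) \<Longrightarrow> x \<otimes>\<^bsub>Zmod p\<^esub> y \<in> carrier (Zmod p)"
    using assms by (auto simp: Zmod_def)
  show "\<one>\<^bsub>Zmod p\<^esub> \<in> carrier (Zmod p)" using assms by (auto simp: Zmod_def)
  show "\<And>x y z. x \<in> carrier (Zmod p) \<Longrightarrow> y \<in> carrier (Zmod p) \<Longrightarrow> z \<in> carrier (Zmod p) \<Longrightarrow>
      x \<otimes>\<^bsub>Zmod p\<^esub> y \<otimes>\<^bsub>Zmod p\<^esub> z = x \<otimes>\<^bsub>Zmod p\<^esub> (y \<otimes>\<^bsub>Zmod p\<^esub> z)"
    by (auto simp: Zmod_def mod_add_left_eq mod_add_right_eq add.assoc)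
  show "\<And>x. x \<in> carrier (Zmod p) \<Longrightarrow> \<one>\<^bsub>Zmod p\<^esub> \<otimes>\<^bsub>Zmod p\<^esub> x = x"
    by (auto simp: Zmod_def)
  show "\<And>x. x \<in> carrier (Zmod p) \<Longrightarrow> \<exists>y\<in>carrier (Zmod p). y \<otimes>\<^bsub>Zmod p\<^esub> x = \<one>\<^bsub>Zmod p\<^esub>"
  proof -
    fix x assume "x \<in> carrier (Zmod p)"
    then have "x < p" by (simp add: Zmod_def)
    then show "\<exists>y\<in>carrier (Zmod p). y \<otimes>\<^bsub>Zmod p\<^esub> x = \<one>\<^bsub>Zmod p\<^esub>"
      using assms by (intro bexI[of _ "(p - x) mod p"]) (auto simp: Zmod_def mod_add_left_eq)
  qed
qed

lemma Zmod_inv: assumes "p > 0" "x < p" shows "inv\<^bsub>Zmod p\<^esub> x = (p - x) mod p"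
proof -
  interpret Z: group "Zmod p" by (rule Zmod_group[OF assms(1)])
  have "x \<in> carrier (Zmod p)" "(p - x) mod p \<in> carrier (Zmod p)" using assms by (auto simp: Zmod_def)
  moreover have "(p - x) mod p \<otimes>\<^bsub>Zmod p\<^esub> x = \<one>\<^bsub>Zmod p\<^esub>"
    using assms by (auto simp: Zmod_def mod_add_left_eq)
  ultimately show ?thesis by (metis Z.inv_equality)
qed

definition sb :: "nat \<Rightarrow> nat \<Rightarrow> nat \<Rightarrow> nat" where
  "sb p b x = (b + p - x) mod p"

lemma sb_int: assumes "x \<le> p" shows "int (sb p b x) = (int b - int x) mod int p"
proof -
  have "int (b + p - x) = int b - int x + int p" using assms by simp
  then have "int (sb p b x) = (int b - int x + int p) mod int p" unfolding sb_def by (metis zmod_int)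
  then show ?thesis by simp
qed

lemma sb_lt: "p > 0 \<Longrightarrow> sb p b x < p" by (simp add: sb_def)

lemma sb_0: "b < p \<Longrightarrow> sb p b 0 = b" by (simp add: sb_def)

lemma sb_sb: assumes "x < p" "y < p" shows "sb p (sb p b x) y = sb p b ((x + y) mod p)"
proof -
  have p: "p > 0" using assms by simp
  have "int (sb p (sb p b x) y) = ((int b - int x) mod int p - int y) mod int p"
    using assms by (simp add: sb_int)
  also have "\<dots> = (int b - int x - int y) mod int p" by (simp add: mod_diff_left_eq)
  also have "\<dots> = (int b - (int x + int y) mod int p) mod int p" by (simp add: mod_diff_right_eq diff_diff_eq)
  also have "\<dots> = int (sb p b ((x + y) mod p))" using p by (simp add: sb_int zmod_int)
  finally show ?thesis by simp
qed

lemma sb_add: assumes "x < p" "b < p" shows "sb p ((b + x) mod p) x = b"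
proof -
  have p: "p > 0" using assms by simp
  have "int (sb p ((b + x) mod p) x) = ((int b + int x) mod int p - int x) mod int p"
    using assms by (simp add: sb_int zmod_int)
  also have "\<dots> = int b mod int p" by (simp add: mod_diff_left_eq)
  also have "\<dots> = int b" using assms by simp
  finally show ?thesis by simp
qed

lemma add_sb: assumes "x < p" "b < p" shows "(sb p b x + x) mod p = b"
proof -
  have p: "p > 0" using assms by simp
  have "int ((sb p b x + x) mod p) = ((int b - int x) mod int p + int x) mod int p"
    using assms by (simp add: sb_int zmod_int)
  also have "\<dots> = int b mod int p" by (simp add: mod_add_left_eq)
  also have "\<dots> = int b" using assms by simp
  finally show ?thesis by simp
qed

lemma restrict_eq_iff: "((\<lambda>b\<in>A. f b) = (\<lambda>b\<in>A. g b)) \<longleftrightarrow> (\<forall>b\<in>A. f b = g b)"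
  by (metis restrict_apply' restrict_ext)

lemma sb0_ne: "0 < y \<Longrightarrow> y < p \<Longrightarrow> sb p 0 y \<noteq> 0"
proof -
  assume y: "0 < y" "y < p"
  then have "sb p 0 y = p - y" by (simp add: sb_def)
  then show ?thesis using y by simp
qed

lemma PiE_upd_in: "\<alpha> \<in> I \<rightarrow>\<^sub>E T \<Longrightarrow> i \<in> I \<Longrightarrow> v \<in> T \<Longrightarrow> \<alpha>(i := v) \<in> I \<rightarrow>\<^sub>E T"
  by (auto simp: PiE_iff extensional_def)

locale wctx = G: group G for G :: "'a wt monoid" +
  fixes p :: nat and W
  assumes p_prime: "Factorial_Ring.prime p" and fin: "finite (carrier G)"
  defines W_def: "W \<equiv> wreath G (Zmod p)"
begin

lemma p_pos: "p > 0" using p_prime prime_gt_0_nat by blast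
lemma p_gt1: "p > 1" using p_prime prime_gt_1_nat by blast

lemma PiE_app [simp, intro]: "\<alpha> \<in> {0..<p} \<rightarrow>\<^sub>E carrier G \<Longrightarrow> b < p \<Longrightarrow> \<alpha> b \<in> carrier G"
  by auto

lemma carrier_W: "carrier W = {Node \<alpha> x | \<alpha> x. \<alpha> \<in> {0..<p} \<rightarrow>\<^sub>E carrier G \<and> x < p}"
  by (auto simp: W_def wreath_def Zmod_def)

lemma Node_in_W [simp]: "Node \<alpha> x \<in> carrier W \<longleftrightarrow> \<alpha> \<in> {0..<p} \<rightarrow>\<^sub>E carrier G \<and> x < p"
  by (auto simp: carrier_W)

lemma one_W: "\<one>\<^bsub>W\<^esub> = Node (\<lambda>b\<in>{0..<p}. \<one>\<^bsub>G\<^esub>) 0"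
  by (simp add: W_def wreath_def Zmod_def)

lemma mult_W: assumes "x < p"
  shows "Node \<alpha> x \<otimes>\<^bsub>W\<^esub> Node \<beta> y = Node (\<lambda>b\<in>{0..<p}. \<alpha> b \<otimes>\<^bsub>G\<^esub> \<beta> (sb p b x)) ((x + y) mod p)"
proof -
  have "b < p \<Longrightarrow> inv\<^bsub>Zmod p\<^esub> x \<otimes>\<^bsub>Zmod p\<^esub> b = sb p b x" for b
  proof -
    assume b: "b < p"
    have i: "inv\<^bsub>Zmod p\<^esub> x = (p - x) mod p" using assms p_pos by (simp add: Zmod_inv)
    have "inv\<^bsub>Zmod p\<^esub> x \<otimes>\<^bsub>Zmod p\<^esub> b = ((p - x) mod p + b) mod p"
      unfolding i by (simp add: Zmod_def)
    also have "\<dots> = (p - x + b) mod p" by (simp add: mod_add_left_eq)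
    also have "p - x + b = b + p - x" using assms by simp
    finally show ?thesis by (simp add: sb_def)
  qed
  then show ?thesis
    by (simp add: W_def wreath_def) (simp add: Zmod_def cong: restrict_cong)
qed

lemma group_W: "group W"
proof (rule groupI)
  fix u v assume "u \<in> carrier W" "v \<in> carrier W"
  then obtain \<alpha> x \<beta> y where u: "u = Node \<alpha> x" "\<alpha> \<in> {0..<p} \<rightarrow>\<^sub>E carrier G" "x < p"
     and v: "v = Node \<beta> y" "\<beta> \<in> {0..<p} \<rightarrow>\<^sub>E carrier G" "y < p" by (auto simp: carrier_W)
  show "u \<otimes>\<^bsub>W\<^esub> v \<in> carrier W"
    using u v p_pos by (auto simp: mult_W sb_lt intro!: G.m_closed)
next
  show "\<one>\<^bsub>W\<^esub> \<in> carrier W" using p_pos by (auto simp: one_W)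
next
  fix u v w assume "u \<in> carrier W" "v \<in> carrier W" "w \<in> carrier W"
  then obtain \<alpha> x \<beta> y \<gamma> z where u: "u = Node \<alpha> x" "\<alpha> \<in> {0..<p} \<rightarrow>\<^sub>E carrier G" "x < p"
     and v: "v = Node \<beta> y" "\<beta> \<in> {0..<p} \<rightarrow>\<^sub>E carrier G" "y < p"
     and w: "w = Node \<gamma> z" "\<gamma> \<in> {0..<p} \<rightarrow>\<^sub>E carrier G" "z < p" by (auto simp: carrier_W)
  have "(\<lambda>b\<in>{0..<p}. (\<lambda>b\<in>{0..<p}. \<alpha> b \<otimes>\<^bsub>G\<^esub> \<beta> (sb p b x)) b \<otimes>\<^bsub>G\<^esub> \<gamma> (sb p b ((x + y) mod p)))
      = (\<lambda>b\<in>{0..<p}. \<alpha> b \<otimes>\<^bsub>G\<^esub> (\<lambda>b\<in>{0..<p}. \<beta> b \<otimes>\<^bsub>G\<^esub> \<gamma> (sb p b y)) (sb p b x))"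
  proof (rule restrict_ext)
    fix b assume b: "b \<in> {0..<p}"
    have "\<alpha> b \<in> carrier G" "\<beta> (sb p b x) \<in> carrier G" "\<gamma> (sb p b ((x + y) mod p)) \<in> carrier G"
      using u v w b p_pos sb_lt by auto
    then show "(\<lambda>b\<in>{0..<p}. \<alpha> b \<otimes>\<^bsub>G\<^esub> \<beta> (sb p b x)) b \<otimes>\<^bsub>G\<^esub> \<gamma> (sb p b ((x + y) mod p))
      = \<alpha> b \<otimes>\<^bsub>G\<^esub> (\<lambda>b\<in>{0..<p}. \<beta> b \<otimes>\<^bsub>G\<^esub> \<gamma> (sb p b y)) (sb p b x)"
      using b p_pos u v by (simp add: sb_lt sb_sb G.m_assoc)
  qed
  then show "u \<otimes>\<^bsub>W\<^esub> v \<otimes>\<^bsub>W\<^esub> w = u \<otimes>\<^bsub>W\<^esub> (v \<otimes>\<^bsub>W\<^esub> w)"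
    using u v w p_pos by (simp add: mult_W mod_add_left_eq mod_add_right_eq add.assoc)
next
  fix u assume "u \<in> carrier W"
  then obtain \<alpha> x where u: "u = Node \<alpha> x" "\<alpha> \<in> {0..<p} \<rightarrow>\<^sub>E carrier G" "x < p"
    by (auto simp: carrier_W)
  have "(\<lambda>b\<in>{0..<p}. (\<lambda>b\<in>{0..<p}. \<one>\<^bsub>G\<^esub>) b \<otimes>\<^bsub>G\<^esub> \<alpha> (sb p b 0)) = \<alpha>"
  proof -
    have ext: "\<alpha> \<in> extensional {0..<p}" using u(2) by (simp add: PiE_iff)
    show ?thesis
  proof (rule extensionalityI[OF restrict_extensional ext])
    fix b show "(\<lambda>b\<in>{0..<p}. (\<lambda>b\<in>{0..<p}. \<one>\<^bsub>G\<^esub>) b \<otimes>\<^bsub>G\<^esub> \<alpha> (sb p b 0)) b = \<alpha> b"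
      using u by (cases "b < p") (auto simp: sb_0)
  qed
  qed
  then show "\<one>\<^bsub>W\<^esub> \<otimes>\<^bsub>W\<^esub> u = u" using u p_pos by (simp add: one_W mult_W)
next
  fix u assume "u \<in> carrier W"
  then obtain \<alpha> x where u: "u = Node \<alpha> x" "\<alpha> \<in> {0..<p} \<rightarrow>\<^sub>E carrier G" "x < p"
    by (auto simp: carrier_W)
  define \<alpha>' where "\<alpha>' = (\<lambda>b\<in>{0..<p}. inv\<^bsub>G\<^esub> (\<alpha> ((b + x) mod p)))"
  have a': "\<alpha>' \<in> {0..<p} \<rightarrow>\<^sub>E carrier G" using u p_pos by (auto simp: \<alpha>'_def)
  have "(\<lambda>b\<in>{0..<p}. \<alpha>' b \<otimes>\<^bsub>G\<^esub> \<alpha> (sb p b ((p - x) mod p))) = (\<lambda>b\<in>{0..<p}. \<one>\<^bsub>G\<^esub>)"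
  proof (rule restrict_ext)
    fix b assume b: "b \<in> {0..<p}"
    have "sb p b ((p - x) mod p) = (b + x) mod p"
    proof -
      have "int (sb p b ((p - x) mod p)) = (int b - int ((p - x) mod p)) mod int p"
        using p_pos by (simp add: sb_int)
      also have "\<dots> = (int b - (int p - int x)) mod int p"
      proof -
        have "int ((p - x) mod p) = (int p - int x) mod int p" using u by (simp add: zmod_int of_nat_diff)
        then show ?thesis by (metis mod_diff_right_eq)
      qed
      also have "\<dots> = (int b + int x) mod int p"
      proof -
        have "int b - (int p - int x) = (int b + int x) - int p" by simp
        then show ?thesis by (simp only: minus_mod_self2)
      qed
      finally show ?thesis by (metis of_nat_add of_nat_eq_iff zmod_int)
    qed
    then show "\<alpha>' b \<otimes>\<^bsub>G\<^esub> \<alpha> (sb p b ((p - x) mod p)) = \<one>\<^bsub>G\<^esub>"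
      using b u p_pos by (auto simp: \<alpha>'_def)
  qed
  moreover have "((p - x) mod p + x) mod p = 0" using u by (simp add: mod_add_left_eq)
  ultimately have "Node \<alpha>' ((p - x) mod p) \<otimes>\<^bsub>W\<^esub> u = \<one>\<^bsub>W\<^esub>"
    using u p_pos by (simp add: one_W mult_W)
  then show "\<exists>v\<in>carrier W. v \<otimes>\<^bsub>W\<^esub> u = \<one>\<^bsub>W\<^esub>" using a' p_pos by (intro bexI[of _ "Node \<alpha>' ((p - x) mod p)"]) auto
qed


sublocale W: group W by (rule group_W)

lemma one_G_W: "\<one>\<^bsub>W\<^esub> = Node (\<lambda>b\<in>{0..<p}. \<one>\<^bsub>G\<^esub>) 0" by (rule one_W)

fun pw :: "(nat \<Rightarrow> 'a wt) \<Rightarrow> nat \<Rightarrow> nat \<Rightarrow> nat \<Rightarrow> 'a wt" where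
  "pw \<alpha> x 0 b = \<one>\<^bsub>G\<^esub>"
| "pw \<alpha> x (Suc n) b = pw \<alpha> x n b \<otimes>\<^bsub>G\<^esub> \<alpha> (sb p b ((n * x) mod p))"

lemma pw_closed [simp, intro]: "\<alpha> \<in> {0..<p} \<rightarrow>\<^sub>E carrier G \<Longrightarrow> pw \<alpha> x n b \<in> carrier G"
  by (induction n) (auto intro!: G.m_closed simp: sb_lt p_pos)

lemma pow_W: assumes a: "\<alpha> \<in> {0..<p} \<rightarrow>\<^sub>E carrier G" and x: "x < p"
  shows "Node \<alpha> x [^]\<^bsub>W\<^esub> n = Node (\<lambda>b\<in>{0..<p}. pw \<alpha> x n b) ((n * x) mod p)"
proof (induction n)
  case 0
  then show ?case by (simp add: one_W restrict_def)
next
  case (Suc n)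
  have "Node \<alpha> x [^]\<^bsub>W\<^esub> Suc n = Node (\<lambda>b\<in>{0..<p}. pw \<alpha> x n b) ((n * x) mod p) \<otimes>\<^bsub>W\<^esub> Node \<alpha> x"
    by (simp only: W.nat_pow_Suc Suc.IH)
  also have "\<dots> = Node (\<lambda>b\<in>{0..<p}. pw \<alpha> x n b \<otimes>\<^bsub>G\<^esub> \<alpha> (sb p b ((n * x) mod p))) (((n * x) mod p + x) mod p)"
    using p_pos by (simp add: mult_W cong: restrict_cong)
  also have "((n * x) mod p + x) mod p = (Suc n * x) mod p"
    by (metis mod_add_left_eq add.commute mult_Suc)
  finally show ?case by simp
qed

lemma pw_shift: assumes a: "\<alpha> \<in> {0..<p} \<rightarrow>\<^sub>E carrier G" and x: "x < p"
  shows "b < p \<Longrightarrow> pw \<alpha> x (Suc n) b = \<alpha> b \<otimes>\<^bsub>G\<^esub> pw \<alpha> x n (sb p b x)"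
proof (induction n arbitrary: b)
  case 0
  then show ?case using a by (simp add: sb_0)
next
  case (Suc n)
  have e: "sb p (sb p b x) ((n * x) mod p) = sb p b ((Suc n * x) mod p)"
    using x p_pos by (simp add: sb_sb mod_add_right_eq)
  have "pw \<alpha> x (Suc (Suc n)) b = (\<alpha> b \<otimes>\<^bsub>G\<^esub> pw \<alpha> x n (sb p b x)) \<otimes>\<^bsub>G\<^esub> \<alpha> (sb p b ((Suc n * x) mod p))"
    using Suc by (simp only: pw.simps)
  also have "\<dots> = \<alpha> b \<otimes>\<^bsub>G\<^esub> (pw \<alpha> x n (sb p b x) \<otimes>\<^bsub>G\<^esub> \<alpha> (sb p b ((Suc n * x) mod p)))"
    using a Suc.prems p_pos by (simp add: G.m_assoc sb_lt)
  also have "\<dots> = \<alpha> b \<otimes>\<^bsub>G\<^esub> pw \<alpha> x (Suc n) (sb p b x)" using e by simp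
  finally show ?case .
qed

lemma ord_conj: assumes "g \<in> carrier G" "h \<in> carrier G"
  shows "G.ord (inv\<^bsub>G\<^esub> g \<otimes>\<^bsub>G\<^esub> h \<otimes>\<^bsub>G\<^esub> g) = G.ord h"
proof -
  have pw: "(inv\<^bsub>G\<^esub> g \<otimes>\<^bsub>G\<^esub> h \<otimes>\<^bsub>G\<^esub> g) [^]\<^bsub>G\<^esub> n = inv\<^bsub>G\<^esub> g \<otimes>\<^bsub>G\<^esub> h [^]\<^bsub>G\<^esub> n \<otimes>\<^bsub>G\<^esub> g" for n :: nat
  proof (induction n)
    case 0 then show ?case using assms by simp
  next
    case (Suc n)
    have "(inv\<^bsub>G\<^esub> g \<otimes>\<^bsub>G\<^esub> h \<otimes>\<^bsub>G\<^esub> g) [^]\<^bsub>G\<^esub> Suc n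
       = (inv\<^bsub>G\<^esub> g \<otimes>\<^bsub>G\<^esub> h [^]\<^bsub>G\<^esub> n \<otimes>\<^bsub>G\<^esub> g) \<otimes>\<^bsub>G\<^esub> (inv\<^bsub>G\<^esub> g \<otimes>\<^bsub>G\<^esub> h \<otimes>\<^bsub>G\<^esub> g)"
      using Suc by simp
    also have "\<dots> = inv\<^bsub>G\<^esub> g \<otimes>\<^bsub>G\<^esub> (h [^]\<^bsub>G\<^esub> n \<otimes>\<^bsub>G\<^esub> h) \<otimes>\<^bsub>G\<^esub> g"
      using assms by (simp add: G.m_assoc G.r_inv_ex G.inv_closed) (simp add: G.m_assoc[symmetric] G.r_inv)
    also have "\<dots> = inv\<^bsub>G\<^esub> g \<otimes>\<^bsub>G\<^esub> h [^]\<^bsub>G\<^esub> Suc n \<otimes>\<^bsub>G\<^esub> g" by simp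
    finally show ?case .
  qed
  have c: "inv\<^bsub>G\<^esub> g \<otimes>\<^bsub>G\<^esub> h \<otimes>\<^bsub>G\<^esub> g \<in> carrier G" using assms by simp
  have "(inv\<^bsub>G\<^esub> g \<otimes>\<^bsub>G\<^esub> y \<otimes>\<^bsub>G\<^esub> g = \<one>\<^bsub>G\<^esub>) \<longleftrightarrow> y = \<one>\<^bsub>G\<^esub>" if "y \<in> carrier G" for y
  proof
    assume "inv\<^bsub>G\<^esub> g \<otimes>\<^bsub>G\<^esub> y \<otimes>\<^bsub>G\<^esub> g = \<one>\<^bsub>G\<^esub>"
    then have "(inv\<^bsub>G\<^esub> g \<otimes>\<^bsub>G\<^esub> y) \<otimes>\<^bsub>G\<^esub> g = (inv\<^bsub>G\<^esub> g \<otimes>\<^bsub>G\<^esub> \<one>\<^bsub>G\<^esub>) \<otimes>\<^bsub>G\<^esub> g"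
      using assms by simp
    then have "inv\<^bsub>G\<^esub> g \<otimes>\<^bsub>G\<^esub> y = inv\<^bsub>G\<^esub> g \<otimes>\<^bsub>G\<^esub> \<one>\<^bsub>G\<^esub>"
      using assms that by (simp only: G.r_cancel G.m_closed G.inv_closed G.one_closed)
    then show "y = \<one>\<^bsub>G\<^esub>" using assms that by (simp only: G.l_cancel G.inv_closed G.one_closed)
  next
    assume "y = \<one>\<^bsub>G\<^esub>" then show "inv\<^bsub>G\<^esub> g \<otimes>\<^bsub>G\<^esub> y \<otimes>\<^bsub>G\<^esub> g = \<one>\<^bsub>G\<^esub>" using assms by simp
  qed
  then have "\<forall>n. (inv\<^bsub>G\<^esub> g \<otimes>\<^bsub>G\<^esub> h \<otimes>\<^bsub>G\<^esub> g) [^]\<^bsub>G\<^esub> n = \<one>\<^bsub>G\<^esub> \<longleftrightarrow> G.ord h dvd n"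
    using assms by (simp add: pw G.pow_eq_id)
  then show ?thesis using G.ord_unique[OF c] by blast
qed


lemma ord_pw_shift: assumes a: "\<alpha> \<in> {0..<p} \<rightarrow>\<^sub>E carrier G" and x: "x < p" and b: "b < p"
  shows "G.ord (pw \<alpha> x p (sb p b x)) = G.ord (pw \<alpha> x p b)"
proof -
  obtain m where m: "p = Suc m" using p_pos by (cases p) auto
  define R where "R = pw \<alpha> x m (sb p b x)"
  have R: "R \<in> carrier G" using a by (simp add: R_def)
  have ab: "\<alpha> b \<in> carrier G" using a b by simp
  have e1: "pw \<alpha> x p b = \<alpha> b \<otimes>\<^bsub>G\<^esub> R"
    using pw_shift[OF a x b, of m] arg_cong[where f="\<lambda>n. pw \<alpha> x n b", OF m] by (simp add: R_def)
  have e: "sb p (sb p b x) ((m * x) mod p) = b"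
  proof -
    have "sb p (sb p b x) ((m * x) mod p) = sb p b ((x + (m * x) mod p) mod p)"
      using x p_pos by (simp add: sb_sb)
    also have "(x + (m * x) mod p) mod p = (x + m * x) mod p" by (simp add: mod_add_right_eq)
    also have "x + m * x = p * x" using m by simp
    finally show ?thesis using b by (simp add: sb_0)
  qed
  have e2: "pw \<alpha> x p (sb p b x) = R \<otimes>\<^bsub>G\<^esub> \<alpha> b"
    using arg_cong[where f="\<lambda>n. pw \<alpha> x n (sb p b x)", OF m] e by (simp add: R_def)
  have "R \<otimes>\<^bsub>G\<^esub> \<alpha> b = inv\<^bsub>G\<^esub> (\<alpha> b) \<otimes>\<^bsub>G\<^esub> (\<alpha> b \<otimes>\<^bsub>G\<^esub> R) \<otimes>\<^bsub>G\<^esub> \<alpha> b"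
    using R ab by (simp add: G.m_assoc[symmetric])
  then show ?thesis using e1 e2 ord_conj[OF ab, of "\<alpha> b \<otimes>\<^bsub>G\<^esub> R"] R ab by simp
qed

lemma ord_pw_all: assumes a: "\<alpha> \<in> {0..<p} \<rightarrow>\<^sub>E carrier G" and x: "x < p" "x \<noteq> 0" and b: "b < p"
  shows "G.ord (pw \<alpha> x p b) = G.ord (pw \<alpha> x p 0)"
proof -
  have j: "G.ord (pw \<alpha> x p (sb p 0 ((j * x) mod p))) = G.ord (pw \<alpha> x p 0)" for j
  proof (induction j)
    case 0 then show ?case using p_pos by (simp add: sb_0)
  next
    case (Suc j)
    have m1: "((j * x) mod p + x) mod p = (Suc j * x) mod p"
      by (metis mod_add_left_eq add.commute mult_Suc)
    have "sb p (sb p 0 ((j * x) mod p)) x = sb p 0 (((j * x) mod p + x) mod p)"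
      using x p_pos by (intro sb_sb) auto
    then have "sb p 0 ((Suc j * x) mod p) = sb p (sb p 0 ((j * x) mod p)) x" using m1 by simp
    then show ?case using ord_pw_shift[OF a x(1) sb_lt[OF p_pos]] Suc by simp
  qed
  have "coprime x p"
  proof -
    have "\<not> p dvd x" using x by (auto dest: dvd_imp_le)
    then show ?thesis using prime_imp_coprime[OF p_prime] coprime_commute by blast
  qed
  then obtain u v where uv: "x * u = p * v + 1" using bezout_nat[of x p] x by auto
  define c where "c = (p - b) mod p"
  have "(c * u * x) mod p = c mod p"
  proof -
    have "c * u * x = c * (p * v + 1)" using uv by (simp add: mult.commute mult.left_commute)
    also have "\<dots> = c + p * (c * v)" by (simp add: algebra_simps)
    finally show ?thesis by simp
  qed
  then have "((c * u) * x) mod p = c" using p_pos by (simp add: c_def)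
  moreover have "sb p 0 c = b" using b by (cases "b = 0") (auto simp: sb_def c_def)
  ultimately show ?thesis using j[of "c * u"] by simp
qed

end

locale wctxp = wctx +
  fixes g :: nat
  assumes ppow: "card (carrier G) = p ^ g"
begin

lemma G_ord_pow: "a \<in> carrier G \<Longrightarrow> \<exists>i. G.ord a = p ^ i"
  using G.ord_dvd_group_order[of a] ppow divides_primepow_nat[OF p_prime]
  by (auto simp: order_def)

lemma carrier_W_image: "carrier W = (\<lambda>(\<alpha>, x). Node \<alpha> x) ` (({0..<p} \<rightarrow>\<^sub>E carrier G) \<times> {0..<p})"
  by (auto simp: carrier_W)

lemma card_W: "card (carrier W) = card (carrier G) ^ p * p"
proof -
  have "inj_on (\<lambda>(\<alpha>, x). Node \<alpha> x) (({0..<p} \<rightarrow>\<^sub>E carrier G) \<times> {0..<p})"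
    by (auto simp: inj_on_def)
  then have "card (carrier W) = card (({0..<p} \<rightarrow>\<^sub>E carrier G) \<times> {0..<p})"
    by (simp add: carrier_W_image card_image)
  also have "\<dots> = card (carrier G) ^ p * p" by (simp add: card_cartesian_product card_PiE)
  finally show ?thesis .
qed

lemma fin_W: "finite (carrier W)"
  unfolding carrier_W_image using fin by (intro finite_imageI finite_cartesian_product finite_PiE) auto

lemma W_ord_pow: "w \<in> carrier W \<Longrightarrow> \<exists>i. W.ord w = p ^ i"
proof -
  assume w: "w \<in> carrier W"
  have c: "card (carrier W) = p ^ (g * p + 1)" by (simp add: card_W ppow power_mult)
  have "W.ord w dvd p ^ (g * p + 1)" using W.ord_dvd_group_order[OF w] c by (simp only: order_def)
  then show ?thesis using divides_primepow_nat[OF p_prime, THEN iffD1] by blast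
qed

lemma pw_0: "b < p \<Longrightarrow> pw \<gamma> 0 n b = \<gamma> b [^]\<^bsub>G\<^esub> n"
  by (induction n) (simp_all add: sb_0)

lemma ppow_dvd: "G.ord a = p ^ i \<Longrightarrow> G.ord c = p ^ j \<Longrightarrow> G.ord a \<le> G.ord c \<Longrightarrow> G.ord a dvd G.ord c"
  using p_gt1 by (simp add: le_imp_power_dvd)

lemma ord_node0: assumes g: "\<gamma> \<in> {0..<p} \<rightarrow>\<^sub>E carrier G"
  shows "W.ord (Node \<gamma> 0) = Max ((\<lambda>b. G.ord (\<gamma> b)) ` {0..<p})"
proof -
  have wc: "Node \<gamma> 0 \<in> carrier W" using g p_pos by simp
  have pow1: "Node \<gamma> 0 [^]\<^bsub>W\<^esub> n = \<one>\<^bsub>W\<^esub> \<longleftrightarrow> (\<forall>b<p. \<gamma> b [^]\<^bsub>G\<^esub> n = \<one>\<^bsub>G\<^esub>)" for n :: nat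
  proof -
    have r: "(\<lambda>b\<in>{0..<p}. pw \<gamma> 0 n b) = (\<lambda>b\<in>{0..<p}. \<gamma> b [^]\<^bsub>G\<^esub> n)"
      by (rule restrict_ext) (simp add: pw_0)
    have "Node \<gamma> 0 [^]\<^bsub>W\<^esub> n = Node (\<lambda>b\<in>{0..<p}. pw \<gamma> 0 n b) ((n * 0) mod p)"
      by (rule pow_W[OF g p_pos])
    also have "\<dots> = Node (\<lambda>b\<in>{0..<p}. \<gamma> b [^]\<^bsub>G\<^esub> n) 0" by (simp only: r mult_0_right mod_0)
    finally have e: "Node \<gamma> 0 [^]\<^bsub>W\<^esub> n = Node (\<lambda>b\<in>{0..<p}. \<gamma> b [^]\<^bsub>G\<^esub> n) 0" .
    have "(Node (\<lambda>b\<in>{0..<p}. \<gamma> b [^]\<^bsub>G\<^esub> n) 0 = \<one>\<^bsub>W\<^esub>) \<longleftrightarrow> (\<forall>b\<in>{0..<p}. \<gamma> b [^]\<^bsub>G\<^esub> n = \<one>\<^bsub>G\<^esub>)"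
    proof -
      have "(Node (\<lambda>b\<in>{0..<p}. \<gamma> b [^]\<^bsub>G\<^esub> n) 0 = \<one>\<^bsub>W\<^esub>) \<longleftrightarrow>
          ((\<lambda>b\<in>{0..<p}. \<gamma> b [^]\<^bsub>G\<^esub> n) = (\<lambda>b\<in>{0..<p}. \<one>\<^bsub>G\<^esub>))"
        unfolding one_W wt.inject by blast
      then show ?thesis using restrict_eq_iff[of "\<lambda>b. \<gamma> b [^]\<^bsub>G\<^esub> n" "{0..<p}" "\<lambda>b. \<one>\<^bsub>G\<^esub>"]
        by (rule trans)
    qed
    then show ?thesis unfolding e by (simp add: Ball_def atLeastLessThan_iff)
  qed
  have cg: "\<forall>b<p. \<gamma> b \<in> carrier G" using g by auto
  have dv: "W.ord (Node \<gamma> 0) dvd n \<longleftrightarrow> (\<forall>b<p. G.ord (\<gamma> b) dvd n)" for n :: nat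
  proof -
    have "W.ord (Node \<gamma> 0) dvd n \<longleftrightarrow> Node \<gamma> 0 [^]\<^bsub>W\<^esub> n = \<one>\<^bsub>W\<^esub>" using W.pow_eq_id[OF wc] by simp
    also have "\<dots> \<longleftrightarrow> (\<forall>b<p. \<gamma> b [^]\<^bsub>G\<^esub> n = \<one>\<^bsub>G\<^esub>)" by (rule pow1)
    also have "\<dots> \<longleftrightarrow> (\<forall>b<p. G.ord (\<gamma> b) dvd n)" using cg G.pow_eq_id by blast
    finally show ?thesis .
  qed
  define L where "L = Max ((\<lambda>b. G.ord (\<gamma> b)) ` {0..<p})"
  have "L \<in> (\<lambda>b. G.ord (\<gamma> b)) ` {0..<p}" unfolding L_def using p_pos by (intro Max_in) auto
  then obtain b0 where b0: "b0 < p" "L = G.ord (\<gamma> b0)" by auto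
  have "\<forall>b<p. G.ord (\<gamma> b) dvd L"
  proof (intro allI impI)
    fix b assume b: "b < p"
    have "G.ord (\<gamma> b) \<le> L" unfolding L_def using b by (intro Max_ge) auto
    moreover obtain i where i: "G.ord (\<gamma> b) = p ^ i" using G_ord_pow[of "\<gamma> b"] cg b by auto
    moreover obtain j where j: "G.ord (\<gamma> b0) = p ^ j" using G_ord_pow[of "\<gamma> b0"] cg b0 by auto
    ultimately show "G.ord (\<gamma> b) dvd L" using ppow_dvd[OF i j] b0 by simp
  qed
  then have "W.ord (Node \<gamma> 0) dvd L" using dv by blast
  moreover have "L dvd W.ord (Node \<gamma> 0)" using dv[of "W.ord (Node \<gamma> 0)"] b0 by auto
  ultimately show ?thesis unfolding L_def by (simp add: dvd_antisym)
qed

lemma ord_nodex: assumes a: "\<alpha> \<in> {0..<p} \<rightarrow>\<^sub>E carrier G" and x: "x < p" "x \<noteq> 0"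
  shows "W.ord (Node \<alpha> x) = p * G.ord (pw \<alpha> x p 0)"
proof -
  have wc: "Node \<alpha> x \<in> carrier W" using a x by simp
  have px: "(p * x) mod p = 0" by simp
  have wp: "Node \<alpha> x [^]\<^bsub>W\<^esub> p = Node (\<lambda>b\<in>{0..<p}. pw \<alpha> x p b) 0"
    using pow_W[OF a x(1), of p] by (simp only: px)
  have rc: "(\<lambda>b\<in>{0..<p}. pw \<alpha> x p b) \<in> {0..<p} \<rightarrow>\<^sub>E carrier G"
    unfolding restrict_PiE_iff using a by blast
  have allb: "\<forall>b\<in>{0..<p}. G.ord ((\<lambda>b\<in>{0..<p}. pw \<alpha> x p b) b) = G.ord (pw \<alpha> x p 0)"
  proof
    fix b assume "b \<in> {0..<p}"
    then have b: "b < p" by simp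
    show "G.ord ((\<lambda>b\<in>{0..<p}. pw \<alpha> x p b) b) = G.ord (pw \<alpha> x p 0)"
      using ord_pw_all[OF a x b] b by simp
  qed
  have im: "(\<lambda>b. G.ord ((\<lambda>b\<in>{0..<p}. pw \<alpha> x p b) b)) ` {0..<p} = {G.ord (pw \<alpha> x p 0)}"
  proof -
    have "(\<lambda>b. G.ord ((\<lambda>b\<in>{0..<p}. pw \<alpha> x p b) b)) ` {0..<p} = (\<lambda>b. G.ord (pw \<alpha> x p 0)) ` {0..<p}"
      by (rule image_cong[OF refl]) (use allb in blast)
    also have "\<dots> = {G.ord (pw \<alpha> x p 0)}" using p_pos by (intro image_constant) simp
    finally show ?thesis .
  qed
  have e: "W.ord (Node \<alpha> x [^]\<^bsub>W\<^esub> p) = G.ord (pw \<alpha> x p 0)"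
    unfolding wp ord_node0[OF rc] im by simp
  obtain i where i: "W.ord (Node \<alpha> x) = p ^ i" using W_ord_pow[OF wc] by blast
  have "Node \<alpha> x \<noteq> \<one>\<^bsub>W\<^esub>" using x by (simp add: one_W)
  then have "W.ord (Node \<alpha> x) \<noteq> 1" using W.ord_eq_1[OF wc] by blast
  then have "i \<noteq> 0" using i by auto
  then have pd: "p dvd W.ord (Node \<alpha> x)" using i by (simp add: dvd_power)
  have "W.ord (Node \<alpha> x [^]\<^bsub>W\<^esub> p) = W.ord (Node \<alpha> x) div p"
    using W.ord_pow[OF wc pd] p_pos by linarith
  then have "G.ord (pw \<alpha> x p 0) = W.ord (Node \<alpha> x) div p" using e by simp
  then show ?thesis using pd by simp
qed


end




context wctxp begin

lemma pw_cong: assumes "\<And>j. j < n \<Longrightarrow> \<alpha> (sb p b ((j * x) mod p)) = \<alpha>' (sb p b ((j * x) mod p))"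
  shows "pw \<alpha> x n b = pw \<alpha>' x n b"
  using assms by (induction n) auto

definition Rf :: "nat \<Rightarrow> (nat \<Rightarrow> 'a wt) \<Rightarrow> 'a wt" where
  "Rf x \<alpha> = pw \<alpha> x (p - 1) (sb p 0 x)"

lemma Rf_closed [simp]: "\<alpha> \<in> {0..<p} \<rightarrow>\<^sub>E carrier G \<Longrightarrow> Rf x \<alpha> \<in> carrier G"
  by (simp add: Rf_def)

lemma pw_p_Rf: assumes a: "\<alpha> \<in> {0..<p} \<rightarrow>\<^sub>E carrier G" and x: "x < p"
  shows "pw \<alpha> x p 0 = \<alpha> 0 \<otimes>\<^bsub>G\<^esub> Rf x \<alpha>"
proof -
  obtain m where m: "p = Suc m" using p_pos by (cases p) auto
  have pm: "p - 1 = m" using m by simp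
  have "pw \<alpha> x p 0 = pw \<alpha> x (Suc m) 0" using arg_cong[where f="\<lambda>n. pw \<alpha> x n 0", OF m] .
  also have "\<dots> = \<alpha> 0 \<otimes>\<^bsub>G\<^esub> pw \<alpha> x m (sb p 0 x)" by (rule pw_shift[OF a x p_pos])
  also have "\<dots> = \<alpha> 0 \<otimes>\<^bsub>G\<^esub> Rf x \<alpha>" unfolding Rf_def pm ..
  finally show ?thesis .
qed

lemma Rf_upd: assumes x: "x < p" "x \<noteq> 0"
  shows "Rf x (\<alpha>(0 := c)) = Rf x \<alpha>"
  unfolding Rf_def
proof (rule pw_cong)
  fix j assume j: "j < p - 1"
  have e: "sb p (sb p 0 x) ((j * x) mod p) = sb p 0 ((Suc j * x) mod p)"
  proof -
    have "sb p (sb p 0 x) ((j * x) mod p) = sb p 0 ((x + (j * x) mod p) mod p)"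
      using x p_pos by (simp add: sb_sb)
    also have "(x + (j * x) mod p) mod p = (Suc j * x) mod p" by (simp add: mod_add_right_eq)
    finally show ?thesis .
  qed
  have nd: "\<not> p dvd (Suc j * x)"
  proof
    assume "p dvd Suc j * x"
    then have "p dvd Suc j \<or> p dvd x" using p_prime prime_dvd_mult_iff by blast
    moreover have "\<not> p dvd Suc j" using j by (auto dest: dvd_imp_le)
    moreover have "\<not> p dvd x" using x by (auto dest: dvd_imp_le)
    ultimately show False by blast
  qed
  then have "(Suc j * x) mod p \<noteq> 0" by (simp only: dvd_eq_mod_eq_0) simp
  then have "sb p 0 ((Suc j * x) mod p) \<noteq> 0"
    using sb0_ne[of "(Suc j * x) mod p" p] p_pos by simp
  then show "(\<alpha>(0 := c)) (sb p (sb p 0 x) ((j * x) mod p)) = \<alpha> (sb p (sb p 0 x) ((j * x) mod p))"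
    using e by simp
qed

lemma pw_one: "pw (\<lambda>b\<in>{0..<p}. \<one>\<^bsub>G\<^esub>) x n b = \<one>\<^bsub>G\<^esub>"
  by (induction n) (auto simp: sb_lt p_pos)

lemma count_x: assumes x: "x < p" "x \<noteq> 0"
  shows "card {\<alpha> \<in> {0..<p} \<rightarrow>\<^sub>E carrier G. P (pw \<alpha> x p 0)}
       = card {a \<in> carrier G. P a} * card (carrier G) ^ (p - 1)"
proof -
  define A where "A = {\<alpha> \<in> {0..<p} \<rightarrow>\<^sub>E carrier G. P (pw \<alpha> x p 0)}"
  define B where "B = {\<gamma> \<in> {0..<p} \<rightarrow>\<^sub>E carrier G. P (\<gamma> 0)}"
  define f where "f = (\<lambda>\<alpha>. \<alpha>(0 := \<alpha> 0 \<otimes>\<^bsub>G\<^esub> Rf x \<alpha>))"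
  define h where "h = (\<lambda>\<gamma>. \<gamma>(0 := \<gamma> 0 \<otimes>\<^bsub>G\<^esub> inv\<^bsub>G\<^esub> (Rf x \<gamma>)))"
  have z: "(0::nat) \<in> {0..<p}" using p_pos by simp
  have fP: "f \<alpha> \<in> {0..<p} \<rightarrow>\<^sub>E carrier G" if "\<alpha> \<in> {0..<p} \<rightarrow>\<^sub>E carrier G" for \<alpha>
    using that z p_pos unfolding f_def by (intro PiE_upd_in) auto
  have hP: "h \<gamma> \<in> {0..<p} \<rightarrow>\<^sub>E carrier G" if "\<gamma> \<in> {0..<p} \<rightarrow>\<^sub>E carrier G" for \<gamma>
    using that z p_pos unfolding h_def by (intro PiE_upd_in) auto
  have bij: "bij_betw f A B"
  proof (rule bij_betw_byWitness[where f'=h])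
    show "\<forall>a\<in>A. h (f a) = a"
    proof
      fix a assume "a \<in> A"
      then have a: "a \<in> {0..<p} \<rightarrow>\<^sub>E carrier G" by (simp add: A_def)
      have R: "Rf x (f a) = Rf x a" unfolding f_def by (rule Rf_upd[OF x])
      have a0: "a 0 \<in> carrier G" "Rf x a \<in> carrier G" using a p_pos by auto
      have "f a 0 \<otimes>\<^bsub>G\<^esub> inv\<^bsub>G\<^esub> (Rf x (f a)) = a 0"
        unfolding R using a0 by (simp add: f_def G.m_assoc G.r_inv)
      then have "h (f a) = (f a)(0 := a 0)" by (simp add: h_def)
      also have "\<dots> = a" by (simp add: f_def)
      finally show "h (f a) = a" .
    qed
    show "\<forall>a\<in>B. f (h a) = a"
    proof
      fix a assume "a \<in> B"
      then have a: "a \<in> {0..<p} \<rightarrow>\<^sub>E carrier G" by (simp add: B_def)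
      have R: "Rf x (h a) = Rf x a" unfolding h_def by (rule Rf_upd[OF x])
      have a0: "a 0 \<in> carrier G" "Rf x a \<in> carrier G" using a p_pos by auto
      have "h a 0 \<otimes>\<^bsub>G\<^esub> Rf x (h a) = a 0"
        unfolding R using a0 by (simp add: h_def G.m_assoc G.l_inv)
      then have "f (h a) = (h a)(0 := a 0)" by (simp add: f_def)
      also have "\<dots> = a" by (simp add: h_def)
      finally show "f (h a) = a" .
    qed
    show "f ` A \<subseteq> B"
    proof
      fix y assume "y \<in> f ` A"
      then obtain a where a: "a \<in> A" "y = f a" by auto
      then have aa: "a \<in> {0..<p} \<rightarrow>\<^sub>E carrier G" "P (pw a x p 0)" by (auto simp: A_def)
      have "f a 0 = pw a x p 0" using pw_p_Rf[OF aa(1) x(1)] by (simp add: f_def)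
      then show "y \<in> B" using a aa fP by (simp add: B_def)
    qed
    show "h ` B \<subseteq> A"
    proof
      fix y assume "y \<in> h ` B"
      then obtain a where a: "a \<in> B" "y = h a" by auto
      then have aa: "a \<in> {0..<p} \<rightarrow>\<^sub>E carrier G" "P (a 0)" by (auto simp: B_def)
      have R: "Rf x (h a) = Rf x a" unfolding h_def by (rule Rf_upd[OF x])
      have a0: "a 0 \<in> carrier G" "Rf x a \<in> carrier G" using aa(1) p_pos by auto
      have "pw (h a) x p 0 = h a 0 \<otimes>\<^bsub>G\<^esub> Rf x (h a)" by (rule pw_p_Rf[OF hP[OF aa(1)] x(1)])
      also have "\<dots> = a 0" unfolding R using a0 by (simp add: h_def G.m_assoc G.l_inv)
      finally have "pw (h a) x p 0 = a 0" .
      then show "y \<in> A" using a aa hP by (simp add: A_def)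
    qed
  qed
  have Beq: "B = PiE {0..<p} (\<lambda>b. if b = 0 then {a \<in> carrier G. P a} else carrier G)"
  proof (rule equalityI)
    show "B \<subseteq> PiE {0..<p} (\<lambda>b. if b = 0 then {a \<in> carrier G. P a} else carrier G)"
      by (auto simp: B_def PiE_iff extensional_def)
  next
    show "PiE {0..<p} (\<lambda>b. if b = 0 then {a \<in> carrier G. P a} else carrier G) \<subseteq> B"
    proof (rule subsetI)
      fix \<gamma> assume H: "\<gamma> \<in> PiE {0..<p} (\<lambda>b. if b = 0 then {a \<in> carrier G. P a} else carrier G)"
      have c: "\<gamma> i \<in> carrier G" if "i < p" for i
      proof -
        have "\<gamma> i \<in> (if i = 0 then {a \<in> carrier G. P a} else carrier G)"
          by (rule PiE_mem[OF H]) (use that in simp)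
        then show ?thesis by (cases "i = 0") auto
      qed
      have "\<gamma> 0 \<in> (if (0::nat) = 0 then {a \<in> carrier G. P a} else carrier G)"
        by (rule PiE_mem[OF H]) (use p_pos in simp)
      then have "P (\<gamma> 0)" by simp
      moreover have "\<gamma> \<in> {0..<p} \<rightarrow>\<^sub>E carrier G" using c H by (auto simp: PiE_iff)
      ultimately show "\<gamma> \<in> B" by (simp add: B_def)
    qed
  qed
  have "card A = card B" by (rule bij_betw_same_card[OF bij])
  also have "B = PiE {0..<p} (\<lambda>b. if b = 0 then {a \<in> carrier G. P a} else carrier G)" by (rule Beq)
  also have "card \<dots> = (\<Prod>b\<in>{0..<p}. card (if b = 0 then {a \<in> carrier G. P a} else carrier G))"
    by (rule card_PiE) simp
  also have "\<dots> = card {a \<in> carrier G. P a} * card (carrier G) ^ (p - 1)"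
  proof -
    have "{0..<p} = insert 0 {1..<p}" using p_pos by auto
    then have "(\<Prod>b\<in>{0..<p}. card (if b = 0 then {a \<in> carrier G. P a} else carrier G))
        = card {a \<in> carrier G. P a} * (\<Prod>b\<in>{1..<p}. card (carrier G))"
      by (simp add: prod.insert)
    then show ?thesis by simp
  qed
  finally show ?thesis by (simp add: A_def)
qed

lemma count_0: "card {\<alpha> \<in> {0..<p} \<rightarrow>\<^sub>E carrier G. \<forall>b<p. P (\<alpha> b)} = card {a \<in> carrier G. P a} ^ p"
proof -
  have "{\<alpha> \<in> {0..<p} \<rightarrow>\<^sub>E carrier G. \<forall>b<p. P (\<alpha> b)} = {0..<p} \<rightarrow>\<^sub>E {a \<in> carrier G. P a}"
    by (auto simp: PiE_iff extensional_def)
  then show ?thesis by (simp add: card_PiE)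
qed

lemma real_Max_le: assumes "finite S" "S \<noteq> {}"
  shows "real (Max S) \<le> t \<longleftrightarrow> (\<forall>x\<in>S. real x \<le> t)"
proof
  assume H: "real (Max S) \<le> t"
  show "\<forall>x\<in>S. real x \<le> t"
  proof
    fix x assume "x \<in> S"
    then have "x \<le> Max S" by (rule Max_ge[OF assms(1)])
    then have "real x \<le> real (Max S)" by simp
    with H show "real x \<le> t" by linarith
  qed
next
  assume "\<forall>x\<in>S. real x \<le> t"
  moreover have "Max S \<in> S" using assms by (rule Max_in)
  ultimately show "real (Max S) \<le> t" by blast
qed


lemma G_ne: "carrier G \<noteq> {}" using G.one_closed by blast

lemma ord_le_MG: "a \<in> carrier G \<Longrightarrow> G.ord a \<le> Max (G.ord ` carrier G)"
  using fin by (intro Max_ge) auto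

lemma Max_W: "Max (W.ord ` carrier W) = p * Max (G.ord ` carrier G)"
proof (rule Max_eqI)
  show "finite (W.ord ` carrier W)" using fin_W by simp
next
  fix y assume "y \<in> W.ord ` carrier W"
  then obtain w where w: "w \<in> carrier W" "y = W.ord w" by auto
  then obtain \<alpha> x where ax: "w = Node \<alpha> x" "\<alpha> \<in> {0..<p} \<rightarrow>\<^sub>E carrier G" "x < p"
    by (auto simp: carrier_W)
  show "y \<le> p * Max (G.ord ` carrier G)"
  proof (cases "x = 0")
    case True
    have "Max ((\<lambda>b. G.ord (\<alpha> b)) ` {0..<p}) \<le> Max (G.ord ` carrier G)"
    proof (rule Max.boundedI)
      show "finite ((\<lambda>b. G.ord (\<alpha> b)) ` {0..<p})" by simp
      show "(\<lambda>b. G.ord (\<alpha> b)) ` {0..<p} \<noteq> {}" using p_pos by simp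
      fix a assume "a \<in> (\<lambda>b. G.ord (\<alpha> b)) ` {0..<p}"
      then obtain b where "b < p" "a = G.ord (\<alpha> b)" by auto
      then show "a \<le> Max (G.ord ` carrier G)" using ax ord_le_MG by simp
    qed
    then have "y \<le> Max (G.ord ` carrier G)" using w ax True ord_node0 by simp
    also have "\<dots> \<le> p * Max (G.ord ` carrier G)" using p_pos by simp
    finally show ?thesis .
  next
    case False
    have "y = p * G.ord (pw \<alpha> x p 0)" using w ax ord_nodex[OF ax(2) ax(3) False] by simp
    also have "\<dots> \<le> p * Max (G.ord ` carrier G)" using ord_le_MG[OF pw_closed[OF ax(2)]] by simp
    finally show ?thesis .
  qed
next
  have "Max (G.ord ` carrier G) \<in> G.ord ` carrier G" using fin G_ne by (intro Max_in) auto
  then obtain g0 where g0: "g0 \<in> carrier G" "G.ord g0 = Max (G.ord ` carrier G)" by auto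
  define one where "one = (\<lambda>b\<in>{0..<p}. \<one>\<^bsub>G\<^esub>)"
  define \<alpha> where "\<alpha> = one(0 := g0)"
  have one: "one \<in> {0..<p} \<rightarrow>\<^sub>E carrier G" by (simp add: one_def)
  have a: "\<alpha> \<in> {0..<p} \<rightarrow>\<^sub>E carrier G" unfolding \<alpha>_def using one g0 p_pos by (intro PiE_upd_in) auto
  have x1: "(1::nat) < p" "(1::nat) \<noteq> 0" using p_gt1 by auto
  have "Rf 1 \<alpha> = Rf 1 one" unfolding \<alpha>_def by (rule Rf_upd[OF x1])
  also have "\<dots> = \<one>\<^bsub>G\<^esub>" unfolding Rf_def one_def by (rule pw_one)
  finally have R: "Rf 1 \<alpha> = \<one>\<^bsub>G\<^esub>" .
  have "pw \<alpha> 1 p 0 = \<alpha> 0 \<otimes>\<^bsub>G\<^esub> Rf 1 \<alpha>" by (rule pw_p_Rf[OF a x1(1)])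
  also have "\<dots> = g0" using R g0 by (simp add: \<alpha>_def)
  finally have "pw \<alpha> 1 p 0 = g0" .
  then have "W.ord (Node \<alpha> 1) = p * Max (G.ord ` carrier G)"
    using ord_nodex[OF a x1] g0 by simp
  moreover have "Node \<alpha> 1 \<in> carrier W" using a x1 by simp
  ultimately show "p * Max (G.ord ` carrier G) \<in> W.ord ` carrier W" by (metis image_eqI)
qed

lemma count_W:
  "card {w \<in> carrier W. real (W.ord w) \<le> s}
     = card {a \<in> carrier G. real (G.ord a) \<le> s} ^ p
       + (p - 1) * (card {a \<in> carrier G. real (G.ord a) \<le> s / p} * card (carrier G) ^ (p - 1))"
proof -
  define A where "A = (\<lambda>x. {\<alpha> \<in> {0..<p} \<rightarrow>\<^sub>E carrier G. real (W.ord (Node \<alpha> x)) \<le> s})"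
  have "{w \<in> carrier W. real (W.ord w) \<le> s} = (\<lambda>(x, \<alpha>). Node \<alpha> x) ` (SIGMA x:{0..<p}. A x)"
    by (auto simp: carrier_W A_def)
  moreover have "inj_on (\<lambda>(x, \<alpha>). Node \<alpha> x) (SIGMA x:{0..<p}. A x)"
    by (auto simp: inj_on_def)
  ultimately have "card {w \<in> carrier W. real (W.ord w) \<le> s} = card (SIGMA x:{0..<p}. A x)"
    by (simp add: card_image)
  also have "\<dots> = (\<Sum>x\<in>{0..<p}. card (A x))"
  proof (rule card_SigmaI)
    show "finite {0..<p}" by simp
    show "\<forall>a\<in>{0..<p}. finite (A a)"
    proof
      fix a
      have "finite ({0..<p} \<rightarrow>\<^sub>E carrier G)" using fin by (simp add: finite_PiE)
      then show "finite (A a)" unfolding A_def by simp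
    qed
  qed
  also have "\<dots> = card (A 0) + (\<Sum>x\<in>{1..<p}. card (A x))"
  proof -
    have "{0..<p} = insert 0 {1..<p}" using p_pos by auto
    then show ?thesis by simp
  qed
  also have "card (A 0) = card {a \<in> carrier G. real (G.ord a) \<le> s} ^ p"
  proof -
    have "A 0 = {\<alpha> \<in> {0..<p} \<rightarrow>\<^sub>E carrier G. \<forall>b<p. real (G.ord (\<alpha> b)) \<le> s}"
    proof -
      have "real (W.ord (Node \<alpha> 0)) \<le> s \<longleftrightarrow> (\<forall>b<p. real (G.ord (\<alpha> b)) \<le> s)"
        if "\<alpha> \<in> {0..<p} \<rightarrow>\<^sub>E carrier G" for \<alpha>
      proof -
        have i: "(\<forall>y\<in>(\<lambda>b. G.ord (\<alpha> b)) ` {0..<p}. real y \<le> s) \<longleftrightarrow> (\<forall>b<p. real (G.ord (\<alpha> b)) \<le> s)"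
          by auto
        show ?thesis
          using ord_node0[OF that] real_Max_le[of "(\<lambda>b. G.ord (\<alpha> b)) ` {0..<p}" s] p_pos i by simp
      qed
      then show ?thesis unfolding A_def by blast
    qed
    then show ?thesis using count_0[of "\<lambda>a. real (G.ord a) \<le> s"] by simp
  qed
  also have "(\<Sum>x\<in>{1..<p}. card (A x))
      = (\<Sum>x\<in>{1..<p}. card {a \<in> carrier G. real (G.ord a) \<le> s / p} * card (carrier G) ^ (p - 1))"
  proof (rule sum.cong[OF refl])
    fix x assume "x \<in> {1..<p}"
    then have x: "x < p" "x \<noteq> 0" by auto
    have "A x = {\<alpha> \<in> {0..<p} \<rightarrow>\<^sub>E carrier G. real (G.ord (pw \<alpha> x p 0)) \<le> s / p}"
    proof -
      have "real (W.ord (Node \<alpha> x)) \<le> s \<longleftrightarrow> real (G.ord (pw \<alpha> x p 0)) \<le> s / p"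
        if "\<alpha> \<in> {0..<p} \<rightarrow>\<^sub>E carrier G" for \<alpha>
      proof -
        have pp: "real p > 0" using p_pos by simp
        have "real (W.ord (Node \<alpha> x)) = real p * real (G.ord (pw \<alpha> x p 0))"
          using ord_nodex[OF that x] by simp
        then show ?thesis using pp by (simp add: pos_le_divide_eq mult.commute)
      qed
      then show ?thesis unfolding A_def by blast
    qed
    then show "card (A x) = card {a \<in> carrier G. real (G.ord a) \<le> s / p} * card (carrier G) ^ (p - 1)"
      using count_x[OF x, of "\<lambda>a. real (G.ord a) \<le> s / p"] by simp
  qed
  also have "\<dots> = (p - 1) * (card {a \<in> carrier G. real (G.ord a) \<le> s / p} * card (carrier G) ^ (p - 1))"
    by simp
  finally show ?thesis .
qed

lemma alg_id: fixes A B n x q :: real assumes "n > 0" "x > 0" "q > 0"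
  shows "(A + (q - 1) * (B * x)) / (n * x * q) = A / (n * x * q) + (q - 1) / q * (B / n)"
  using assms by (simp add: field_simps)

lemma r_W: "r_ratio p W k = (r_ratio p G (k - 1)) ^ p / p + (real p - 1) / p * r_ratio p G k"
proof -
  define M where "M = Max (G.ord ` carrier G)"
  define N where "N = card (carrier G)"
  define cA where "cA = card {a \<in> carrier G. real (G.ord a) \<le> real M * real p powi (- (k - 1))}"
  define cB where "cB = card {a \<in> carrier G. real (G.ord a) \<le> real M * real p powi (- k)}"
  have pp: "real p > 0" using p_pos by simp
  have Npos: "N > 0" unfolding N_def using fin G_ne by (simp add: card_gt_0_iff)
  have s1: "real (p * M) * real p powi (- k) = real M * real p powi (- (k - 1))"
  proof -
    have "real p powi (- (k - 1)) = real p powi (- k + 1)" by (rule arg_cong[where f="\<lambda>i. real p powi i"]) simp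
    also have "\<dots> = real p powi (- k) * real p powi 1" by (rule power_int_add) (use pp in simp)
    also have "\<dots> = real p powi (- k) * real p" by simp
    finally show ?thesis by simp
  qed
  have s2: "real (p * M) * real p powi (- k) / real p = real M * real p powi (- k)"
    using pp by simp
  have cW: "card {w \<in> carrier W. real (W.ord w) \<le> real (p * M) * real p powi (- k)}
      = cA ^ p + (p - 1) * (cB * N ^ (p - 1))"
  proof -
    have c1: "card {w \<in> carrier W. real (W.ord w) \<le> real (p * M) * real p powi (- k)}
     = card {a \<in> carrier G. real (G.ord a) \<le> real (p * M) * real p powi (- k)} ^ p
       + (p - 1) * (card {a \<in> carrier G. real (G.ord a) \<le> real (p * M) * real p powi (- k) / p} * card (carrier G) ^ (p - 1))"
      by (rule count_W)
    then have c2: "card {w \<in> carrier W. real (W.ord w) \<le> real (p * M) * real p powi (- k)}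
     = card {a \<in> carrier G. real (G.ord a) \<le> real (p * M) * real p powi (- k)} ^ p
       + (p - 1) * (card {a \<in> carrier G. real (G.ord a) \<le> real M * real p powi (- k)} * card (carrier G) ^ (p - 1))"
      by (simp only: s2)
    show ?thesis using c2 unfolding cA_def cB_def N_def s1 .
  qed
  have rW: "r_ratio p W k = real (cA ^ p + (p - 1) * (cB * N ^ (p - 1))) / real (N ^ p * p)"
  proof -
    have "r_ratio p W k = real (card {w \<in> carrier W. real (W.ord w) \<le> real (p * M) * real p powi (- k)})
        / real (card (carrier W))"
      unfolding r_ratio_def Max_W M_def ..
    also have "\<dots> = real (cA ^ p + (p - 1) * (cB * N ^ (p - 1))) / real (N ^ p * p)"
      unfolding cW card_W N_def ..
    finally show ?thesis .
  qed
  have rA: "r_ratio p G (k - 1) = real cA / real N" unfolding r_ratio_def cA_def M_def N_def by simp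
  have rB: "r_ratio p G k = real cB / real N" unfolding r_ratio_def cB_def M_def N_def by simp
  have NN: "real N > 0" using Npos by simp
  define x where "x = real N ^ (p - 1)"
  have xp: "x > 0" using NN by (simp add: x_def)
  have Np: "real N ^ p = real N * x"
  proof -
    have "p = Suc (p - 1)" using p_pos by simp
    then have "real N ^ p = real N ^ Suc (p - 1)" by (rule arg_cong)
    then show ?thesis by (simp add: x_def)
  qed
  have nu: "real (cA ^ p + (p - 1) * (cB * N ^ (p - 1))) = real cA ^ p + (real p - 1) * (real cB * x)"
    using p_pos by (simp add: of_nat_diff x_def)
  have de: "real (N ^ p * p) = real N * x * real p" using Np by simp
  have rA': "(real cA / real N) ^ p / p = real cA ^ p / (real N * x * real p)"
    using Np by (simp add: power_divide)
  have "real (cA ^ p + (p - 1) * (cB * N ^ (p - 1))) / real (N ^ p * p)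
      = (real cA / real N) ^ p / p + (real p - 1) / p * (real cB / real N)"
    unfolding nu de rA' using alg_id[OF NN xp pp] .
  then show ?thesis using rW rA rB by simp
qed

end




lemma leaf_group_group: assumes "group A" shows "group (leaf_group A)"
proof -
  interpret A: group A by (rule assms)
  show ?thesis
  proof (rule groupI)
    fix x y assume "x \<in> carrier (leaf_group A)" "y \<in> carrier (leaf_group A)"
    then show "x \<otimes>\<^bsub>leaf_group A\<^esub> y \<in> carrier (leaf_group A)"
      by (auto simp: leaf_group_def)
  next
    show "\<one>\<^bsub>leaf_group A\<^esub> \<in> carrier (leaf_group A)" by (simp add: leaf_group_def)
  next
    fix x y z assume "x \<in> carrier (leaf_group A)" "y \<in> carrier (leaf_group A)" "z \<in> carrier (leaf_group A)"
    then show "x \<otimes>\<^bsub>leaf_group A\<^esub> y \<otimes>\<^bsub>leaf_group A\<^esub> z = x \<otimes>\<^bsub>leaf_group A\<^esub> (y \<otimes>\<^bsub>leaf_group A\<^esub> z)"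
      by (auto simp: leaf_group_def A.m_assoc)
  next
    fix x assume "x \<in> carrier (leaf_group A)"
    then show "\<one>\<^bsub>leaf_group A\<^esub> \<otimes>\<^bsub>leaf_group A\<^esub> x = x"
      by (auto simp: leaf_group_def)
  next
    fix x assume "x \<in> carrier (leaf_group A)"
    then obtain a where a: "a \<in> carrier A" "x = Leaf a" by (auto simp: leaf_group_def)
    show "\<exists>y\<in>carrier (leaf_group A). y \<otimes>\<^bsub>leaf_group A\<^esub> x = \<one>\<^bsub>leaf_group A\<^esub>"
      using a by (intro bexI[of _ "Leaf (inv\<^bsub>A\<^esub> a)"]) (auto simp: leaf_group_def)
  qed
qed

lemma leaf_group_card: "card (carrier (leaf_group A)) = card (carrier A)"
  by (simp add: leaf_group_def card_image inj_on_def)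

lemma leaf_group_finite: "finite (carrier A) \<Longrightarrow> finite (carrier (leaf_group A))"
  by (simp add: leaf_group_def)

lemma iter_props:
  assumes p: "Factorial_Ring.prime p" and A: "group A" "finite (carrier A)" "card (carrier A) = p ^ g"
  shows "group (iter_wreath p A n) \<and> finite (carrier (iter_wreath p A n))
         \<and> (\<exists>g. card (carrier (iter_wreath p A n)) = p ^ g)"
proof (induction n)
  case 0
  have "card (carrier (leaf_group A)) = p ^ g" using leaf_group_card[of A] A(3) by simp
  then show ?case using leaf_group_group[OF A(1)] leaf_group_finite[OF A(2)] by auto
next
  case (Suc n)
  then obtain g' where g': "card (carrier (iter_wreath p A n)) = p ^ g'" by blast
  interpret X: wctxp "iter_wreath p A n" p "wreath (iter_wreath p A n) (Zmod p)" g'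
    using Suc g' p by (intro wctxp.intro wctx.intro) (auto simp: wctx_axioms_def wctxp_axioms_def)
  have "card (carrier (iter_wreath p A (Suc n))) = p ^ (g' * p + 1)"
    using X.card_W g' by (simp add: power_mult)
  then have "\<exists>g. card (carrier (iter_wreath p A (Suc n))) = p ^ g" by blast
  then show ?case using X.group_W X.fin_W by simp
qed

lemma r_nonpos: assumes "finite (carrier G)" "carrier G \<noteq> {}" "p > 0" "k \<le> 0"
  shows "r_ratio p G k = 1"
proof -
  define M where "M = Max (group.ord G ` carrier G)"
  have pk: "real p powi (- k) \<ge> 1" using assms by simp
  have "{x \<in> carrier G. real (group.ord G x) \<le> real M * real p powi (- k)} = carrier G"
  proof -
    have "real (group.ord G x) \<le> real M * real p powi (- k)" if "x \<in> carrier G" for x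
    proof -
      have "group.ord G x \<le> M" unfolding M_def using assms that by (intro Max_ge) auto
      then have "real (group.ord G x) \<le> real M" by simp
      also have "\<dots> \<le> real M * real p powi (- k)" using pk by (simp add: mult_le_cancel_left1)
      finally show ?thesis .
    qed
    then show ?thesis by auto
  qed
  moreover have "card (carrier G) > 0" using assms by (simp add: card_gt_0_iff)
  ultimately show ?thesis unfolding r_ratio_def M_def by simp
qed

lemma r_bounds: assumes "finite (carrier G)"
  shows "0 \<le> r_ratio p G k" "r_ratio p G k \<le> 1"
proof -
  let ?S = "{x \<in> carrier G. real (group.ord G x) \<le> real (Max (group.ord G ` carrier G)) * real p powi (- k)}"
  have "card ?S \<le> card (carrier G)" using assms by (intro card_mono) auto
  then show "r_ratio p G k \<le> 1" unfolding r_ratio_def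
    by (cases "card (carrier G) = 0") (auto simp: divide_le_eq_1)
  show "0 \<le> r_ratio p G k" unfolding r_ratio_def by simp
qed

lemma lim_rec:
  fixes e d :: "nat \<Rightarrow> real" and q :: real
  assumes q: "0 \<le> q" "q < 1" and e0: "\<And>n. 0 \<le> e n"
    and rec: "\<And>n. e (Suc n) \<le> q * e n + d n" and d: "d \<longlonglongrightarrow> 0"
  shows "e \<longlonglongrightarrow> 0"
proof (rule LIMSEQ_I)
  fix r :: real assume r: "0 < r"
  define \<epsilon> where "\<epsilon> = r / 2"
  have ep: "\<epsilon> > 0" using r by (simp add: \<epsilon>_def)
  have "\<epsilon> * (1 - q) > 0" using ep q by simp
  then obtain N where N: "\<forall>n\<ge>N. norm (d n - 0) < \<epsilon> * (1 - q)" using LIMSEQ_D[OF d] by blast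
  have bound: "e (N + m) \<le> q ^ m * e N + \<epsilon>" for m
  proof (induction m)
    case 0 then show ?case using ep by simp
  next
    case (Suc m)
    have dm: "d (N + m) \<le> \<epsilon> * (1 - q)" using N[rule_format, of "N + m"] by auto
    have "e (N + Suc m) \<le> q * e (N + m) + d (N + m)" using rec[of "N + m"] by simp
    also have "\<dots> \<le> q * (q ^ m * e N + \<epsilon>) + \<epsilon> * (1 - q)"
      using Suc q(1) dm by (intro add_mono mult_left_mono) auto
    also have "\<dots> = q ^ Suc m * e N + \<epsilon>" by (simp add: algebra_simps)
    finally show ?case .
  qed
  have "(\<lambda>m. q ^ m * e N) \<longlonglongrightarrow> 0 * e N"
    using q by (intro tendsto_mult LIMSEQ_power_zero tendsto_const) simp
  then obtain M where M: "\<forall>m\<ge>M. norm (q ^ m * e N - 0) < \<epsilon>" using LIMSEQ_D ep by fastforce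
  show "\<exists>no. \<forall>n\<ge>no. norm (e n - 0) < r"
  proof (intro exI allI impI)
    fix n assume n: "N + M \<le> n"
    then have "e n = e (N + (n - N))" by simp
    also have "\<dots> \<le> q ^ (n - N) * e N + \<epsilon>" by (rule bound)
    also have "q ^ (n - N) * e N < \<epsilon>"
    proof -
      have "\<bar>q ^ (n - N) * e N\<bar> < \<epsilon>" using M[rule_format, of "n - N"] n by auto
      then show ?thesis by (meson abs_ge_self le_less_trans)
    qed
    finally have "e n < 2 * \<epsilon>" by simp
    then show "norm (e n - 0) < r" using e0[of n] by (simp add: \<epsilon>_def)
  qed
qed

theorem lemma3:
  fixes p :: nat and A :: "('a, 'm) monoid_scheme" and k :: int
  assumes "Factorial_Ring.prime p"
    and "group A"
    and "finite (carrier A)"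
    and "\<exists>g::nat. card (carrier A) = p ^ g"
    and "card (carrier A) > 1"
  shows "(\<lambda>n. r_ratio p (iter_wreath p A n) k) \<longlonglongrightarrow> 1"
proof -
  obtain g where g: "card (carrier A) = p ^ g" using assms(4) by blast
  have pp: "p > 0" using assms(1) prime_gt_0_nat by blast
  have p1: "p > 1" using assms(1) prime_gt_1_nat by blast
  note IP = iter_props[OF assms(1) assms(2) assms(3) g]
  define r where "r = (\<lambda>n k. r_ratio p (iter_wreath p A n) k)"
  have fin: "finite (carrier (iter_wreath p A n))" for n using IP by blast
  have ne: "carrier (iter_wreath p A n) \<noteq> {}" for n
  proof -
    have "group (iter_wreath p A n)" using IP by blast
    then show ?thesis by (metis empty_iff group.is_monoid monoid.one_closed)
  qed
  have rec: "r (Suc n) k = (r n (k - 1)) ^ p / p + (real p - 1) / p * r n k" for n k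
  proof -
    obtain g' where g': "card (carrier (iter_wreath p A n)) = p ^ g'" using IP by blast
    interpret X: wctxp "iter_wreath p A n" p "wreath (iter_wreath p A n) (Zmod p)" g'
      using IP g' assms(1) by (intro wctxp.intro wctx.intro) (auto simp: wctx_axioms_def wctxp_axioms_def)
    show ?thesis unfolding r_def using X.r_W by simp
  qed
  have b0: "0 \<le> r n k" and b1: "r n k \<le> 1" for n k unfolding r_def using r_bounds[OF fin] by auto
  have nonpos: "k \<le> 0 \<Longrightarrow> r n k = 1" for n k unfolding r_def using r_nonpos[OF fin ne pp] by blast
  have main: "(\<lambda>n. r n (int j)) \<longlonglongrightarrow> 1" for j
  proof (induction j)
    case 0
    then show ?case using nonpos by simp
  next
    case (Suc j)
    define e where "e = (\<lambda>n. 1 - r n (int (Suc j)))"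
    define d where "d = (\<lambda>n. (1 - (r n (int j)) ^ p) / p)"
    define q where "q = (real p - 1) / p"
    have q: "0 \<le> q" "q < 1" using p1 by (auto simp: q_def)
    have e0: "0 \<le> e n" for n using b1 by (simp add: e_def)
    have erec: "e (Suc n) \<le> q * e n + d n" for n
    proof -
      have "r (Suc n) (int (Suc j)) = (r n (int j)) ^ p / p + q * r n (int (Suc j))"
        using rec[of n "int (Suc j)"] by (simp add: q_def)
      moreover have "1 = 1 / real p + q" using pp by (simp add: q_def field_simps)
      ultimately have "e (Suc n) = q * e n + d n"
        unfolding e_def d_def by (simp add: algebra_simps diff_divide_distrib)
      then show ?thesis by simp
    qed
    have "(\<lambda>n. (1 - (r n (int j)) ^ p) / p) \<longlonglongrightarrow> (1 - 1 ^ p) / p"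
      using Suc.IH pp by (intro tendsto_intros) auto
    then have d: "d \<longlonglongrightarrow> 0" by (simp add: d_def)
    have "e \<longlonglongrightarrow> 0" by (rule lim_rec[OF q e0 erec d])
    then have "(\<lambda>n. 1 - e n) \<longlonglongrightarrow> 1 - 0" by (intro tendsto_intros)
    then show ?case by (simp add: e_def)
  qed
  show ?thesis
  proof (cases "k \<le> 0")
    case True
    then show ?thesis using nonpos unfolding r_def by simp
  next
    case False
    then have "k = int (nat k)" by simp
    then show ?thesis using main[of "nat k"] unfolding r_def by metis
  qed
qed


end
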